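(* For $c>0$ define $$p_1(c)=1-2\Phi(c^{-1})-\sqrt{\tfrac{2}{\pi}}\,c\left(1-\exp\{-\tfrac{c^{-2}}{2}\}\right),$$ where $\Phi(s)=\Pr[X\ge s]$ for $X\sim N(0,1)$. Then for all $c>0$, $$p_1(c)=\sqrt{\tfrac{2}{\pi}}\sum_{k=0}^\infty\frac{(-1)^k}{2^kk!(2k+2)(2k+1)}\frac{1}{c^{2k+1}},$$ and for every $\delta\le\frac12$ and every $c\le\min\left\{\delta,\frac{1}{\sqrt{2\ln(1/\delta)}}\right\}$, $$e^{-\sqrt{\frac{2}{\pi}}(1+\delta)c}\le p_1(c)\le e^{-\sqrt{\frac2\pi}(1-\delta^3)c}.$$
   Context: $p_1(c)$ is the probability that two points at distance $cw$ collide under the Euclidean LSH $h(x)=\lceil (g^\top x+b)/w\rceil$ with $g\sim N(0,I_d)$, $b\sim U[0,w]$; the claim concerns only the explicit formula. *)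

theory Defs
  imports "HOL-Probability.Probability"
begin

definition Phi_tail :: "real \<Rightarrow> real" where
  "Phi_tail s = measure (density lborel std_normal_density) {s..}"

definition p1 :: "real \<Rightarrow> real" where
  "p1 c = 1 - 2 * Phi_tail (1 / c) - sqrt (2 / pi) * c * (1 - exp (- (c powi (-2)) / 2))"

end

theory Submission
  imports Defs "HOL-Real_Asymp.Real_Asymp"
begin

definition cT :: "nat \<Rightarrow> real" where
  "cT n = (if odd n then (-1) ^ (n div 2) / (2 ^ (n div 2) * fact (n div 2) * real n) else 0)"
lemma z1: "n \<notin> range (\<lambda>k::nat. 2*k+1) \<Longrightarrow> cT n = 0"
proof -
  assume "n \<notin> range (\<lambda>k::nat. 2*k+1)"
  then have "even n" by (metis odd_two_times_div_two_succ rangeI)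
  then show ?thesis by (simp add: cT_def)
qed
lemma z2: "n \<notin> range (\<lambda>k::nat. 2*k) \<Longrightarrow> diffs cT n = 0"
proof -
  assume "n \<notin> range (\<lambda>k::nat. 2*k)"
  then have "odd n" by (metis even_two_times_div_two rangeI)
  then show ?thesis by (simp add: cT_def diffs_def)
qed
lemma e1: "cT (2*k+1) = (-1) ^ k / (2 ^ k * fact k * (2 * real k + 1))"
  by (simp add: cT_def)
lemma g1: "(a::real) * (b / c / d) / e = a * b / (c * d * e)" by simp
lemma g3: "(a::real)/(b*c) = inverse c * a / b" by (simp add: divide_inverse mult_ac)
lemma cancel_aux: "c \<noteq> 0 \<Longrightarrow> c * (x / c) = (x::real)" by simp
lemma d: "diffs cT (2*k) = (-1)^k / (2^k * fact k)"
proof -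
  have "diffs cT (2*k) = real (Suc (2*k)) * cT (2*k+1)" by (simp add: diffs_def)
  also have "\<dots> = (2 * real k + 1) * (((-1)^k / (2^k * fact k)) / (2 * real k + 1))"
  proof -
    have s: "real (Suc (2*k)) = 2 * real k + 1" by simp
    have q: "(-1) ^ k / (2 ^ k * fact k * (2 * real k + 1)) = ((-1)^k / (2^k * fact k)) / (2 * real k + 1)"
      by (simp only: divide_divide_eq_left)
    show ?thesis unfolding e1 s q by (rule refl)
  qed
  also have "\<dots> = (-1)^k / (2^k * fact k)"
  proof -
    have nz: "2 * real k + 1 \<noteq> 0" by (smt (verit) of_nat_0_le_iff)
    show ?thesis by (rule cancel_aux[OF nz])
  qed
  finally show ?thesis .
qed
definition T :: "real \<Rightarrow> real" where
  "T x = (\<Sum>n. cT n * x ^ n)"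

lemma odd_summable: "summable (\<lambda>k. (-1) ^ k / (2 ^ k * fact k * (2 * real k + 1)) * y ^ (2*k+1))"
proof (rule summable_comparison_test')
  show "summable (\<lambda>k. \<bar>y\<bar> * ((y\<^sup>2/2) ^ k /\<^sub>R fact k))"
    using exp_converges[of "y\<^sup>2/2"] by (intro summable_mult) (auto simp: sums_iff)
  fix k :: nat
  have yy: "\<bar>y ^ (2*k+1)\<bar> = \<bar>y\<bar> * (y\<^sup>2) ^ k"
    by (simp add: power_abs power_mult abs_mult)
  have "norm ((-1) ^ k / (2 ^ k * fact k * (2 * real k + 1)) * y ^ (2*k+1))
      = \<bar>y ^ (2*k+1)\<bar> / (2 ^ k * fact k * (2 * real k + 1))"
    by (simp add: abs_mult abs_divide)
  also have "\<dots> = \<bar>y\<bar> * ((y\<^sup>2/2) ^ k / fact k) / (2 * real k + 1)"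
    unfolding yy by (simp only: power_divide g1)
  also have "\<dots> \<le> \<bar>y\<bar> * ((y\<^sup>2/2) ^ k / fact k)"
  proof -
    have X: "0 \<le> \<bar>y\<bar> * ((y\<^sup>2/2) ^ k / fact k)" by simp
    show ?thesis using frac_le[OF X order.refl, of 1 "2 * real k + 1"] by simp
  qed
  also have "\<bar>y\<bar> * ((y\<^sup>2/2) ^ k / fact k) = \<bar>y\<bar> * ((y\<^sup>2/2) ^ k /\<^sub>R fact k)"
    by (simp add: field_simps)
  finally show "norm ((-1) ^ k / (2 ^ k * fact k * (2 * real k + 1)) * y ^ (2*k+1)) \<le> \<bar>y\<bar> * ((y\<^sup>2/2) ^ k /\<^sub>R fact k)" .
qed

lemma cT_sums_odd: "(\<lambda>n. cT n * y ^ n) sums (\<Sum>k. (-1) ^ k / (2 ^ k * fact k * (2 * real k + 1)) * y ^ (2*k+1))"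
proof -
  have sm: "strict_mono (\<lambda>k::nat. 2*k+1)" by (auto simp: strict_mono_def)
  have S: "(\<lambda>k. cT (2*k+1) * y ^ (2*k+1)) sums (\<Sum>k. (-1) ^ k / (2 ^ k * fact k * (2 * real k + 1)) * y ^ (2*k+1))"
    unfolding e1 using odd_summable by (rule summable_sums)
  have zz: "\<And>n. n \<notin> range (\<lambda>k::nat. 2*k+1) \<Longrightarrow> cT n * y^n = 0" using z1 by simp
  show ?thesis using iffD1[OF sums_mono_reindex[of "\<lambda>k::nat. 2*k+1" "\<lambda>n. cT n * y^n", OF sm zz] S] .
qed

lemma T_odd_sums: "(\<lambda>k. (-1) ^ k / (2 ^ k * fact k * (2 * real k + 1)) * y ^ (2*k+1)) sums T y"
proof -
  have "T y = (\<Sum>k. (-1) ^ k / (2 ^ k * fact k * (2 * real k + 1)) * y ^ (2*k+1))"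
    using cT_sums_odd unfolding T_def by (simp add: sums_iff)
  then show ?thesis using odd_summable by (simp add: summable_sums)
qed

lemma cT_summable: "summable (\<lambda>n. cT n * y ^ n)"
  using cT_sums_odd by (simp add: sums_iff)

lemma diffs_cT_sums: "(\<lambda>n. diffs cT n * x ^ n) sums exp (- x\<^sup>2 / 2)"
proof -
  have sm: "strict_mono (\<lambda>k::nat. 2*k)" by (auto simp: strict_mono_def)
  have eq0: "(- x\<^sup>2 / 2) ^ k = (-1)^k * (x\<^sup>2)^k / 2^k" for k
    by (simp only: power_divide power_mult_distrib[symmetric] mult_minus1)
  have eq: "diffs cT (2*k) * x ^ (2*k) = (- x\<^sup>2 / 2) ^ k /\<^sub>R fact k" for k
    unfolding d eq0 power_mult by (simp add: g3)
  have S: "(\<lambda>k. diffs cT (2*k) * x ^ (2*k)) sums exp (- x\<^sup>2 / 2)"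
    unfolding eq by (rule exp_converges)
  have zz: "\<And>n. n \<notin> range (\<lambda>k::nat. 2*k) \<Longrightarrow> diffs cT n * x^n = 0" using z2 by simp
  show ?thesis using iffD1[OF sums_mono_reindex[of "\<lambda>k::nat. 2*k" "\<lambda>n. diffs cT n * x^n", OF sm zz] S] .
qed

lemma T_deriv: "(T has_real_derivative exp (- x\<^sup>2 / 2)) (at x)"
proof -
  have "(T has_real_derivative (\<Sum>n. diffs cT n * x ^ n)) (at x)"
    unfolding T_def[abs_def] by (rule termdiffs_strong_converges_everywhere[OF cT_summable])
  then show ?thesis using diffs_cT_sums by (simp add: sums_iff)
qed

lemma T_0: "T 0 = 0"
  using T_odd_sums[of 0] by (simp add: sums_iff)


lemma sR: "(x::real) /\<^sub>R f = x / f" by (simp add: divide_inverse mult.commute)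

lemma exp_part_sums:
  fixes s :: real
  assumes s: "s > 0"
  shows "(\<lambda>k. (-1) ^ k * s ^ (2*k+1) / (2 ^ (k+1) * fact (k+1))) sums ((1 - exp (- s\<^sup>2 / 2)) / s)"
proof -
  define u where "u = - s\<^sup>2 / 2"
  have "(\<lambda>n. u ^ n /\<^sub>R fact n) sums exp u" by (rule exp_converges)
  then have "(\<lambda>n. u ^ Suc n /\<^sub>R fact (Suc n)) sums (exp u - 1)"
    using sums_Suc_iff[of "\<lambda>n. u ^ n /\<^sub>R fact n" "exp u - 1"] by simp
  then have "(\<lambda>n. (- 1 / s) * (u ^ Suc n /\<^sub>R fact (Suc n))) sums ((- 1 / s) * (exp u - 1))"
    by (rule sums_mult)
  moreover have "(- 1 / s) * (u ^ Suc n /\<^sub>R fact (Suc n)) = (-1) ^ n * s ^ (2*n+1) / (2 ^ (n+1) * fact (n+1))" for n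
  proof -
    have e: "u ^ m = (-1)^m * (s\<^sup>2)^m / 2^m" for m
      unfolding u_def by (simp only: power_divide power_mult_distrib[symmetric] mult_minus1)
    have e2: "(s\<^sup>2)^(Suc n) = s * s ^ (2*n+1)"
    proof -
      have q: "2 * Suc n = Suc (2*n+1)" by simp
      show ?thesis unfolding power_mult[symmetric] q by (rule power_Suc)
    qed
    have "(- 1 / s) * (u ^ Suc n /\<^sub>R fact (Suc n)) = (- 1 / s) * ((-1)^(Suc n) * (s * s ^ (2*n+1)) / 2^(Suc n) / fact (Suc n))"
      unfolding e e2 sR by (rule refl)
    also have "\<dots> = (-1) ^ n * s ^ (2*n+1) / (2 ^ (n+1) * fact (n+1))"
    proof -
      have m1: "(-1::real) ^ Suc n = - ((-1) ^ n)" by simp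
      show ?thesis using s unfolding m1 by (simp del: fact_Suc power_Suc add: field_simps)
    qed
    finally show ?thesis .
  qed
  moreover have "(- 1 / s) * (exp u - 1) = (1 - exp (- s\<^sup>2 / 2)) / s"
    using s by (simp add: u_def field_simps)
  ultimately show ?thesis by simp
qed

lemma p1_series_aux:
  assumes s: "s > 0"
  shows "(\<lambda>k. (-1) ^ k / (2 ^ k * fact k * (2 * real k + 2) * (2 * real k + 1)) * s ^ (2*k+1))
           sums (T s - (1 - exp (- s\<^sup>2 / 2)) / s)"
proof -
  have "(\<lambda>k. (-1) ^ k / (2 ^ k * fact k * (2 * real k + 1)) * s ^ (2*k+1) - (-1) ^ k * s ^ (2*k+1) / (2 ^ (k+1) * fact (k+1)))
     sums (T s - (1 - exp (- s\<^sup>2 / 2)) / s)"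
    by (rule sums_diff[OF T_odd_sums exp_part_sums[OF s]])
  moreover have "(-1) ^ k / (2 ^ k * fact k * (2 * real k + 1)) * s ^ (2*k+1) - (-1) ^ k * s ^ (2*k+1) / (2 ^ (k+1) * fact (k+1))
     = (-1) ^ k / (2 ^ k * fact k * (2 * real k + 2) * (2 * real k + 1)) * s ^ (2*k+1)" for k
  proof -
    have f: "(2::real) ^ (k+1) * fact (k+1) = 2 ^ k * fact k * (2 * real k + 2)"
      by (simp add: algebra_simps)
    have p: "0 < (2::real) ^ k * fact k" by simp
    have gen: "B > 0 \<Longrightarrow> m \<ge> 0 \<Longrightarrow> X / (B * (2*m+1)) * Y - X * Y / (B * (2*m+2)) = X / (B * (2*m+2) * (2*m+1)) * Y"
      for B m X Y :: real
    proof -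
      assume "B > 0" "m \<ge> 0"
      then have "B \<noteq> 0" "2*m+1 \<noteq> 0" "2*m+2 \<noteq> 0" by auto
      then have h: "1/(2*m+1) - 1/(2*m+2) = 1/((2*m+2)*(2*m+1))"
        by (simp add: diff_frac_eq)
      have a1: "X / (B*(2*m+1)) * Y = (X*Y/B) * (1/(2*m+1))" by simp
      have a2: "X*Y/(B*(2*m+2)) = (X*Y/B)*(1/(2*m+2))" by simp
      have a3: "X/(B*(2*m+2)*(2*m+1))*Y = (X*Y/B) * (1/((2*m+2)*(2*m+1)))" by simp
      show ?thesis unfolding a1 a2 a3 h[symmetric] by (simp only: right_diff_distrib)
    qed
    show ?thesis unfolding f using gen[OF p, of "real k"] by simp
  qed
  ultimately show ?thesis by simp
qed

abbreviation NN :: "real set \<Rightarrow> ennreal" where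
  "NN A \<equiv> (\<integral>\<^sup>+x. ennreal (std_normal_density x) * indicator A x \<partial>lborel)"

lemma NN_Phi: "NN {s..} = ennreal (Phi_tail s)"
proof -
  interpret prob_space "density lborel std_normal_density"
    by (rule prob_space_normal_density) simp
  have "NN {s..} = emeasure (density lborel std_normal_density) {s..}"
    by (simp add: emeasure_density)
  also have "\<dots> = ennreal (Phi_tail s)"
    by (simp add: emeasure_eq_measure Phi_tail_def)
  finally show ?thesis .
qed

lemma Phi_nonneg: "Phi_tail s \<ge> 0"
  by (simp add: Phi_tail_def)

lemma NN_half: "NN {0..} = ennreal (1/2)"
proof -
  have int: "(\<integral>\<^sup>+x. ennreal (indicator {0..} x * exp (- x\<^sup>2)) \<partial>lborel) = ennreal (sqrt pi / 2)"
    using gaussian_moment_0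
    by (subst nn_integral_eq_integral) (auto simp: has_bochner_integral_iff)
  have c: "sqrt 2 \<noteq> (0::real)" by simp
  have "NN {0..} = ennreal \<bar>sqrt 2\<bar> * (\<integral>\<^sup>+x. ennreal (std_normal_density (0 + sqrt 2 * x)) * indicator {0..} (0 + sqrt 2 * x) \<partial>lborel)"
    by (rule nn_integral_real_affine[OF _ c]) measurable
  also have "(\<lambda>x. ennreal (std_normal_density (0 + sqrt 2 * x)) * indicator {0..} (0 + sqrt 2 * x))
      = (\<lambda>x. ennreal (1 / sqrt (2 * pi)) * ennreal (indicator {0..} x * exp (- x\<^sup>2)))"
  proof
    fix x :: real
    have "std_normal_density (sqrt 2 * x) = 1 / sqrt (2 * pi) * exp (- x\<^sup>2)"
      by (simp add: std_normal_density_def power_mult_distrib)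
    show "ennreal (std_normal_density (0 + sqrt 2 * x)) * indicator {0..} (0 + sqrt 2 * x)
      = ennreal (1 / sqrt (2 * pi)) * ennreal (indicator {0..} x * exp (- x\<^sup>2))"
    proof (cases "0 \<le> x")
      case True
      have "ennreal (1 / sqrt (2 * pi)) * ennreal (exp (- x\<^sup>2)) = ennreal (1 / sqrt (2 * pi) * exp (- x\<^sup>2))"
        by (subst ennreal_mult[symmetric]) auto
      then show ?thesis using True \<open>std_normal_density (sqrt 2 * x) = 1 / sqrt (2 * pi) * exp (- x\<^sup>2)\<close>
        by (simp add: indicator_def)
    next
      case False
      then show ?thesis by (simp add: indicator_def zero_le_mult_iff)
    qed
  qed
  also have "ennreal \<bar>sqrt 2\<bar> * (\<integral>\<^sup>+x. ennreal (1 / sqrt (2 * pi)) * ennreal (indicator {0..} x * exp (- x\<^sup>2)) \<partial>lborel)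
      = ennreal (sqrt 2) * (ennreal (1 / sqrt (2 * pi)) * ennreal (sqrt pi / 2))"
    by (subst nn_integral_cmult) (auto simp: int)
  also have "\<dots> = ennreal (sqrt 2 * (1 / sqrt (2 * pi) * (sqrt pi / 2)))"
  proof -
    have "ennreal (1 / sqrt (2 * pi)) * ennreal (sqrt pi / 2) = ennreal (1 / sqrt (2 * pi) * (sqrt pi / 2))"
      by (subst ennreal_mult[symmetric]) auto
    moreover have "ennreal (sqrt 2) * ennreal (1 / sqrt (2 * pi) * (sqrt pi / 2)) = ennreal (sqrt 2 * (1 / sqrt (2 * pi) * (sqrt pi / 2)))"
      by (subst ennreal_mult[symmetric]) auto
    ultimately show ?thesis by simp
  qed
  also have "sqrt 2 * (1 / sqrt (2 * pi) * (sqrt pi / 2)) = 1/2"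
    by (simp add: real_sqrt_mult)
  finally show ?thesis .
qed

lemma T_mono: "0 \<le> s \<Longrightarrow> 0 \<le> T s"
  using DERIV_nonneg_imp_nondecreasing[of 0 s T] T_deriv T_0 by fastforce

lemma NN_Icc: "0 \<le> s \<Longrightarrow> NN {0..s} = ennreal (T s / sqrt (2 * pi))"
proof -
  assume s: "0 \<le> s"
  have "NN {0..s} = ennreal (T s / sqrt (2 * pi) - T 0 / sqrt (2 * pi))"
  proof (rule nn_integral_FTC_Icc)
    fix x :: real
    show "((\<lambda>x. T x / sqrt (2 * pi)) has_real_derivative std_normal_density x) (at x)"
      using DERIV_cdivide[OF T_deriv, of "sqrt (2*pi)" x] by (simp add: std_normal_density_def)
  qed (use s in auto)
  then show ?thesis by (simp add: T_0)
qed

lemma split_ind: "0 \<le> s \<Longrightarrow> indicator {0..} (x::real) = (indicator {0..s} x + indicator {s<..} x :: ennreal)"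
proof (cases "x \<le> s")
  case True
  assume "0 \<le> s"
  then show ?thesis using True by (cases "0 \<le> x") (auto simp: indicator_def)
next
  case False
  assume "0 \<le> s"
  then show ?thesis using False by (auto simp: indicator_def)
qed

lemma NN_open_closed: "NN {s<..} = NN {s..}"
  by (rule nn_integral_cong_AE) (use AE_lborel_singleton[of s] in \<open>auto simp: indicator_def\<close>)

lemma Phi_formula: "0 \<le> s \<Longrightarrow> Phi_tail s = 1/2 - T s / sqrt (2 * pi)"
proof -
  assume s: "0 \<le> s"
  have "ennreal (1/2) = NN {0..}" by (rule NN_half[symmetric])
  also have "\<dots> = (\<integral>\<^sup>+x. ennreal (std_normal_density x) * indicator {0..s} x + ennreal (std_normal_density x) * indicator {s<..} x \<partial>lborel)"
    by (rule nn_integral_cong) (simp add: split_ind[OF s] distrib_left)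
  also have "\<dots> = NN {0..s} + NN {s<..}"
    by (rule nn_integral_add) auto
  also have "\<dots> = ennreal (T s / sqrt (2 * pi)) + ennreal (Phi_tail s)"
    by (simp add: NN_Icc[OF s] NN_open_closed NN_Phi)
  also have "\<dots> = ennreal (T s / sqrt (2 * pi) + Phi_tail s)"
    using T_mono[OF s] Phi_nonneg by simp
  finally have "1/2 = T s / sqrt (2 * pi) + Phi_tail s"
    using T_mono[OF s] Phi_nonneg by (subst (asm) ennreal_inj) auto
  then show ?thesis by simp
qed

lemma mills_upper:
  assumes s: "s > 0"
  shows "Phi_tail s \<le> exp (- s\<^sup>2 / 2) / (sqrt (2 * pi) * s)"
proof -
  let ?f = "\<lambda>x::real. x * exp (- x\<^sup>2 / 2) / (sqrt (2 * pi) * s)"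
  have I: "(\<integral>\<^sup>+x. ennreal (?f x) * indicator {s..} x \<partial>lborel)
      = ennreal (0 - (- (exp (- s\<^sup>2 / 2) / (sqrt (2 * pi) * s))))"
  proof (rule nn_integral_FTC_atLeast[where F = "\<lambda>x. - (exp (- x\<^sup>2 / 2) / (sqrt (2 * pi) * s))"])
    show "?f \<in> borel_measurable borel" by measurable
    fix x :: real assume x: "s \<le> x"
    show "((\<lambda>x. - (exp (- x\<^sup>2 / 2) / (sqrt (2 * pi) * s))) has_real_derivative ?f x) (at x)"
      using s by (auto intro!: derivative_eq_intros simp: field_simps)
    show "0 \<le> ?f x" using x s by simp
  next
    show "((\<lambda>x. - (exp (- x\<^sup>2 / 2) / (sqrt (2 * pi) * s))) \<longlongrightarrow> 0) at_top"
      using s by real_asymp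
  qed
  have "ennreal (Phi_tail s) \<le> (\<integral>\<^sup>+x. ennreal (?f x) * indicator {s..} x \<partial>lborel)"
    unfolding NN_Phi[symmetric]
  proof (rule nn_integral_mono)
    fix x :: real
    show "ennreal (std_normal_density x) * indicator {s..} x \<le> ennreal (?f x) * indicator {s..} x"
    proof (cases "s \<le> x")
      case True
      have "std_normal_density x = 1 * (exp (- x\<^sup>2 / 2) / sqrt (2 * pi))"
        by (simp add: std_normal_density_def)
      also have "\<dots> \<le> (x / s) * (exp (- x\<^sup>2 / 2) / sqrt (2 * pi))"
        by (rule mult_right_mono) (use True s in auto)
      also have "\<dots> = ?f x" by simp
      finally have "ennreal (std_normal_density x) \<le> ennreal (?f x)" by (rule ennreal_leI)
      then show ?thesis using True by (simp add: indicator_def)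
    qed (simp add: indicator_def)
  qed
  then show ?thesis unfolding I using s by simp
qed

lemma mills_lower:
  assumes s: "s > 0"
  shows "exp (- s\<^sup>2 / 2) / (sqrt (2 * pi) * s) \<le> (1 + 1 / s\<^sup>2) * Phi_tail s"
proof -
  let ?f = "\<lambda>x::real. (1 + 1 / x\<^sup>2) * exp (- x\<^sup>2 / 2) / sqrt (2 * pi)"
  have I: "(\<integral>\<^sup>+x. ennreal (?f x) * indicator {s..} x \<partial>lborel)
      = ennreal (0 - (- (exp (- s\<^sup>2 / 2) / s) / sqrt (2 * pi)))"
  proof (rule nn_integral_FTC_atLeast[where F = "\<lambda>x. - (exp (- x\<^sup>2 / 2) / x) / sqrt (2 * pi)"])
    show "?f \<in> borel_measurable borel" by measurable
    fix x :: real assume x: "s \<le> x"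
    then have x0: "x \<noteq> 0" using s by auto
    have "((\<lambda>x. - (exp (- x\<^sup>2 / 2) / x)) has_real_derivative (1 + 1 / x\<^sup>2) * exp (- x\<^sup>2 / 2)) (at x)"
      using x0 by (auto intro!: derivative_eq_intros simp: field_simps power2_eq_square)
    then show "((\<lambda>x. - (exp (- x\<^sup>2 / 2) / x) / sqrt (2 * pi)) has_real_derivative ?f x) (at x)"
      by (rule DERIV_cdivide)
    show "0 \<le> ?f x" by simp
  next
    show "((\<lambda>x. - (exp (- x\<^sup>2 / 2) / x) / sqrt (2 * pi)) \<longlongrightarrow> 0) at_top"
      by real_asymp
  qed
  have "(\<integral>\<^sup>+x. ennreal (?f x) * indicator {s..} x \<partial>lborel)
      \<le> (\<integral>\<^sup>+x. ennreal (1 + 1 / s\<^sup>2) * (ennreal (std_normal_density x) * indicator {s..} x) \<partial>lborel)"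
  proof (rule nn_integral_mono)
    fix x :: real
    show "ennreal (?f x) * indicator {s..} x \<le> ennreal (1 + 1 / s\<^sup>2) * (ennreal (std_normal_density x) * indicator {s..} x)"
    proof (cases "s \<le> x")
      case True
      have "1 / x\<^sup>2 \<le> 1 / s\<^sup>2"
        using True s by (intro divide_left_mono power_mono) auto
      then have "?f x \<le> (1 + 1 / s\<^sup>2) * std_normal_density x"
        by (simp add: std_normal_density_def divide_right_mono mult_right_mono)
      then have "ennreal (?f x) \<le> ennreal ((1 + 1 / s\<^sup>2) * std_normal_density x)"
        by (rule ennreal_leI)
      also have "\<dots> = ennreal (1 + 1 / s\<^sup>2) * ennreal (std_normal_density x)"
        by (subst ennreal_mult[symmetric]) auto
      finally show ?thesis using True by (simp add: indicator_def)
    qed (simp add: indicator_def)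
  qed
  also have "\<dots> = ennreal (1 + 1 / s\<^sup>2) * NN {s..}"
    by (rule nn_integral_cmult) measurable
  also have "\<dots> = ennreal ((1 + 1 / s\<^sup>2) * Phi_tail s)"
    unfolding NN_Phi by (subst ennreal_mult[symmetric]) (auto simp: Phi_nonneg)
  finally show ?thesis unfolding I
    using s Phi_nonneg[of s] by (simp add: ennreal_le_iff mult.commute)
qed

lemma a_eq: "2 / sqrt (2 * pi) = sqrt (2 / pi)"
proof -
  have "sqrt (2 / pi) = sqrt 2 / sqrt pi" by (simp add: real_sqrt_divide)
  also have "\<dots> = (sqrt 2 * sqrt 2) / (sqrt 2 * sqrt pi)"
    by (rule mult_divide_mult_cancel_left[symmetric]) simp
  also have "\<dots> = 2 / sqrt (2 * pi)" by (simp add: real_sqrt_mult)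
  finally show ?thesis by simp
qed

lemma a_le: "sqrt (2 / pi) \<le> 0.82"
proof -
  have "2 / pi \<le> 0.82\<^sup>2" using pi_gt3 by (simp add: field_simps power2_eq_square)
  then have "sqrt (2 / pi) \<le> sqrt (0.82\<^sup>2)" by (rule real_sqrt_le_mono)
  then show ?thesis by simp
qed

lemma expq: "0 \<le> (y::real) \<Longrightarrow> exp (- y) \<le> 1 - y + y\<^sup>2 / 2"
proof -
  assume y: "0 \<le> y"
  let ?g = "\<lambda>y::real. 1 - y + y\<^sup>2 / 2 - exp (- y)"
  have "?g 0 \<le> ?g y"
  proof (rule DERIV_nonneg_imp_nondecreasing[OF y])
    fix x :: real assume "0 \<le> x" "x \<le> y"
    have "(?g has_real_derivative (-1 + x + exp (- x))) (at x)"
      by (auto intro!: derivative_eq_intros)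
    moreover have "-1 + x + exp (- x) \<ge> 0" using exp_ge_add_one_self[of "- x"] by linarith
    ultimately show "\<exists>d. (?g has_real_derivative d) (at x) \<and> 0 \<le> d" by blast
  qed
  then show ?thesis by simp
qed

lemma p1_alt:
  assumes c: "c > 0"
  shows "p1 c = 1 - 2 * Phi_tail (1 / c) - sqrt (2 / pi) * c * (1 - exp (- (1 / c)\<^sup>2 / 2))"
proof -
  have "c powi (-2) = (1 / c)\<^sup>2"
    by (simp add: power_int_minus_divide power_one_over)
  then show ?thesis by (simp add: p1_def)
qed

lemma part1:
  assumes c: "c > 0"
  shows "(\<lambda>k::nat. sqrt (2 / pi) * ((-1) ^ k / (2 ^ k * fact k * (2 * real k + 2) * (2 * real k + 1)))
                       * (1 / c ^ (2 * k + 1))) sums p1 c"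
proof -
  define s where "s = 1 / c"
  have s: "s > 0" using c by (simp add: s_def)
  have "(\<lambda>k. sqrt (2 / pi) * ((-1) ^ k / (2 ^ k * fact k * (2 * real k + 2) * (2 * real k + 1)) * s ^ (2*k+1)))
           sums (sqrt (2 / pi) * (T s - (1 - exp (- s\<^sup>2 / 2)) / s))"
    by (rule sums_mult[OF p1_series_aux[OF s]])
  moreover have "sqrt (2 / pi) * (T s - (1 - exp (- s\<^sup>2 / 2)) / s) = p1 c"
  proof -
    have "p1 c = 1 - 2 * (1/2 - T s / sqrt (2 * pi)) - sqrt (2 / pi) * c * (1 - exp (- s\<^sup>2 / 2))"
      unfolding p1_alt[OF c] s_def[symmetric] Phi_formula[OF less_imp_le[OF s]] ..
    also have "\<dots> = (2 / sqrt (2 * pi)) * T s - sqrt (2 / pi) * c * (1 - exp (- s\<^sup>2 / 2))"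
      by simp
    also have "\<dots> = sqrt (2 / pi) * (T s - (1 - exp (- s\<^sup>2 / 2)) / s)"
      unfolding a_eq using c by (simp add: s_def algebra_simps)
    finally show ?thesis by simp
  qed
  ultimately have S: "(\<lambda>k. sqrt (2 / pi) * ((-1) ^ k / (2 ^ k * fact k * (2 * real k + 2) * (2 * real k + 1)) * s ^ (2*k+1))) sums p1 c"
    by simp
  have pw: "s ^ (2*k+1) = 1 / c ^ (2 * k + 1)" for k
    by (simp add: s_def power_one_over)
  show ?thesis using S unfolding pw by (simp only: mult.assoc)
qed

lemma part2:
  assumes d0: "0 < \<delta>" and d1: "\<delta> \<le> 1 / 2" and c0: "0 < c"
    and cm: "c \<le> min \<delta> (1 / sqrt (2 * ln (1 / \<delta>)))"
  shows "exp (- sqrt (2 / pi) * (1 + \<delta>) * c) \<le> p1 c \<and> p1 c \<le> exp (- sqrt (2 / pi) * (1 - \<delta> ^ 3) * c)"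
proof -
  define s where "s = 1 / c"
  define a where "a = sqrt (2 / pi)"
  define E where "E = exp (- s\<^sup>2 / 2)"
  have s: "s > 0" using c0 by (simp add: s_def)
  have a0: "0 < a" by (simp add: a_def)
  have aub: "a \<le> 0.82" unfolding a_def by (rule a_le)
  have E0: "0 < E" by (simp add: E_def)
  have p1e: "p1 c = 1 - 2 * Phi_tail s - a * c * (1 - E)"
    unfolding p1_alt[OF c0] s_def a_def E_def ..
  have phis: "exp (- s\<^sup>2 / 2) / (sqrt (2 * pi) * s) = a * c * E / 2"
  proof -
    have "exp (- s\<^sup>2 / 2) / (sqrt (2 * pi) * s) = (2 / sqrt (2 * pi)) * c * E / 2"
      using c0 by (simp add: s_def E_def)
    then show ?thesis unfolding a_eq a_def .
  qed
  have up: "Phi_tail s \<le> a * c * E / 2" using mills_upper[OF s] unfolding phis .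
  have lo: "a * c * E / 2 \<le> (1 + c\<^sup>2) * Phi_tail s"
    using mills_lower[OF s] unfolding phis by (simp add: s_def power_one_over)
  have cd: "c \<le> \<delta>" using cm by simp
  have L: "0 < ln (1 / \<delta>)" using d0 d1 by simp
  have Ed: "E \<le> \<delta>"
  proof -
    have "c \<le> 1 / sqrt (2 * ln (1 / \<delta>))" using cm by simp
    then have "c * sqrt (2 * ln (1 / \<delta>)) \<le> 1" using L by (simp add: field_simps)
    then have "(c * sqrt (2 * ln (1 / \<delta>)))\<^sup>2 \<le> 1\<^sup>2"
      using c0 L by (intro power_mono) auto
    then have "c\<^sup>2 * (2 * ln (1 / \<delta>)) \<le> 1" using L by (simp add: power_mult_distrib)
    then have "ln (1 / \<delta>) \<le> s\<^sup>2 / 2" using c0 by (simp add: s_def field_simps power_one_over)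
    then have "- s\<^sup>2 / 2 \<le> ln \<delta>" using d0 by (simp add: ln_div)
    then have "E \<le> exp (ln \<delta>)" unfolding E_def by simp
    then show ?thesis using d0 by simp
  qed
  have p1lo: "1 - a * c \<le> p1 c" using up E0 a0 c0 unfolding p1e by (simp add: algebra_simps)
  define y where "y = a * (1 + \<delta>) * c"
  have y0: "0 \<le> y" using a0 d0 c0 by (simp add: y_def)
  have "exp (- y) \<le> 1 - y + y\<^sup>2 / 2" by (rule expq[OF y0])
  also have "\<dots> \<le> 1 - a * c"
  proof -
    have "(1 + \<delta>)\<^sup>2 \<le> (3/2)\<^sup>2" using d0 d1 by (intro power_mono) auto
    then have "(1 + \<delta>)\<^sup>2 \<le> 9/4" by (simp add: power2_eq_square)
    have h1: "a * (1 + \<delta>)\<^sup>2 * c \<le> 0.82 * (9/4) * \<delta>"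
    proof -
      have "a * (1 + \<delta>)\<^sup>2 \<le> 0.82 * (9/4)"
        by (rule mult_mono[OF aub \<open>(1 + \<delta>)\<^sup>2 \<le> 9/4\<close>]) (use a0 in auto)
      then show ?thesis by (rule mult_mono[OF _ cd]) (use c0 in auto)
    qed
    have "y\<^sup>2 / 2 = (a * c) * (a * (1 + \<delta>)\<^sup>2 * c) / 2" by (simp add: y_def power2_eq_square)
    also have "\<dots> \<le> (a * c) * (2 * \<delta>) / 2"
      using h1 a0 c0 d0 by (intro divide_right_mono mult_left_mono) auto
    finally have "y\<^sup>2 / 2 \<le> a * c * \<delta>" by simp
    then show ?thesis by (simp add: y_def algebra_simps)
  qed
  also have "\<dots> \<le> p1 c" by (rule p1lo)
  finally have lower: "exp (- sqrt (2 / pi) * (1 + \<delta>) * c) \<le> p1 c" by (simp add: y_def a_def)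
  have pc: "0 < 1 + c\<^sup>2" by (simp add: add_pos_nonneg)
  have "a * c * E \<le> 2 * Phi_tail s * (1 + c\<^sup>2)" using lo by (simp add: field_simps)
  then have "a * c * E / (1 + c\<^sup>2) \<le> 2 * Phi_tail s"
    using pc by (simp add: pos_divide_le_eq)
  then have "p1 c \<le> 1 - a * c + (a * c * E - a * c * E / (1 + c\<^sup>2))" unfolding p1e by (simp add: algebra_simps)
  also have "a * c * E - a * c * E / (1 + c\<^sup>2) = a * c * E * (c\<^sup>2 / (1 + c\<^sup>2))"
    using pc by (simp add: field_simps)
  also have "\<dots> \<le> a * c * \<delta> * \<delta>\<^sup>2"
  proof -
    have "c\<^sup>2 / (1 + c\<^sup>2) \<le> c\<^sup>2" using frac_le[of "c\<^sup>2" "c\<^sup>2" 1 "1 + c\<^sup>2"] by simp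
    also have "\<dots> \<le> \<delta>\<^sup>2" using cd c0 by (intro power_mono) auto
    finally have "c\<^sup>2 / (1 + c\<^sup>2) \<le> \<delta>\<^sup>2" .
    moreover have "a * c * E \<le> a * c * \<delta>" using Ed a0 c0 by simp
    ultimately show ?thesis using a0 c0 E0 by (intro mult_mono) auto
  qed
  also have "1 - a * c + a * c * \<delta> * \<delta>\<^sup>2 = 1 + (- a * (1 - \<delta> ^ 3) * c)"
    by (simp add: algebra_simps power2_eq_square power3_eq_cube)
  also have "\<dots> \<le> exp (- a * (1 - \<delta> ^ 3) * c)" by (rule exp_ge_add_one_self)
  finally have upper: "p1 c \<le> exp (- sqrt (2 / pi) * (1 - \<delta> ^ 3) * c)" by (simp add: a_def)
  show ?thesis using lower upper by simp
qed

theorem lemma6: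
  shows "(\<forall>c::real. c > 0 \<longrightarrow>
           (\<lambda>k::nat. sqrt (2 / pi) * ((-1) ^ k / (2 ^ k * fact k * (2 * real k + 2) * (2 * real k + 1)))
                       * (1 / c ^ (2 * k + 1))) sums p1 c) \<and>
         (\<forall>(\<delta>::real) (c::real). 0 < \<delta> \<longrightarrow> \<delta> \<le> 1 / 2 \<longrightarrow> 0 < c \<longrightarrow>
           c \<le> min \<delta> (1 / sqrt (2 * ln (1 / \<delta>))) \<longrightarrow>
           exp (- sqrt (2 / pi) * (1 + \<delta>) * c) \<le> p1 c \<and>
           p1 c \<le> exp (- sqrt (2 / pi) * (1 - \<delta> ^ 3) * c))"
  using part1 part2 by blast

end
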